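(* For every integer $m\ge1$: $D_{-m}(C(t);n)=0$ for $1\le n\le m$, and for $n\ge m+1$ $$D_{-m}(C(t);n)=(-1)^{\binom{m+1}{2}}\,t^{\,n-m-1}\,D_{m+1}(C(t);n-m-1)$$ as an identity of polynomials in $t$.
   Context: The Narayana polynomials are $C_0(t)=1$ and $C_n(t)=\sum_{k=0}^{n-1}\binom{n-1}{k}\binom{n}{k}\frac{1}{k+1}t^k$ for $n\ge1$; they are extended by $C_n(t)=0$ for $n<0$. Their generating function $\sum_{n\ge0}C_n(t)x^n$ equals $\frac{1+x(t-1)-\sqrt{1-2x(t+1)+x^2(t-1)^2}}{2tx}$. For $m\in\mathbb Z$ and $n\ge0$, $D_m(C(t);n)=\det(C_{i+j+m}(t))_{i,j=0}^{n-1}$, the $0\times0$ determinant being $1$. *)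

theory Defs
  imports "HOL-Computational_Algebra.Polynomial" "Jordan_Normal_Form.Determinant"
begin

definition narayana :: "int \<Rightarrow> rat poly" where
  "narayana n = (if n < 0 then 0 else if n = 0 then 1 else
     (\<Sum>k = 0..nat n - 1. monom (of_nat ((nat n - 1) choose k) * of_nat (nat n choose k)
                                   / of_nat (k + 1)) k))"

text \<open>Hankel determinant D_m(C(t);n) = det (C_{i+j+m}(t))_{i,j=0}^{n-1}; the 0x0 determinant is 1.\<close>
definition hankel_det :: "int \<Rightarrow> nat \<Rightarrow> rat poly" where
  "hankel_det m n = det (mat n n (\<lambda>(i, j). narayana (int i + int j + m)))"

end

theory Submission
  imports Defs "HOL-Computational_Algebra.Formal_Power_Series"
begin


definition ff :: "rat \<Rightarrow> nat \<Rightarrow> rat" where "ff a k = (\<Prod>i<k. a - of_nat i)"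

lemma ff_0[simp]: "ff a 0 = 1" by (simp add: ff_def)
lemma ff_Suc: "ff a (Suc k) = ff a k * (a - of_nat k)" by (simp add: ff_def)
lemma ff_shift: "ff (a+1) (Suc k) = (a+1) * ff a k"
  unfolding ff_def prod.lessThan_Suc_shift by (simp add: algebra_simps)

lemma bin_ff: "(of_nat (n choose k) :: rat) = ff (of_nat n) k / fact k"
  by (simp add: binomial_gbinomial gbinomial_prod_rev ff_def atLeast0LessThan)

lemma coeff_nar:
  assumes "n \<ge> 1"
  shows "coeff (narayana (int n)) k = ff (of_nat n - 1) k * ff (of_nat n) k / (fact k * fact k * of_nat (k+1))"
proof -
  have "coeff (narayana (int n)) k = (\<Sum>i = 0..n - 1. (if i = k then of_nat ((n - 1) choose i) * of_nat (n choose i) / of_nat (i + 1) else 0))"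
    using assms by (simp add: narayana_def coeff_sum coeff_monom)
  also have "\<dots> = (if k \<in> {0..n-1} then of_nat ((n - 1) choose k) * of_nat (n choose k) / of_nat (k + 1) else 0)"
    by (rule sum.delta[OF finite_atLeastAtMost])
  also have "\<dots> = of_nat ((n-1) choose k) * of_nat (n choose k) / of_nat (k+1)"
    by auto
  also have "\<dots> = ff (of_nat n - 1) k * ff (of_nat n) k / (fact k * fact k * of_nat (k+1))"
    using assms by (simp add: bin_ff of_nat_diff)
  finally show ?thesis .
qed

definition cc :: "rat \<Rightarrow> nat \<Rightarrow> rat" where
  "cc a k = ff a k * ff (a+1) k / (fact k * fact k * of_nat (k+1))"

lemma polyidW:
  fixes y J W :: rat
  shows "(y + 4) *
     ((y + 2) * (y + 1) * W * (y - J) *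
      ((y + 3) * (y + 2) * (y + 1) * W)) =
     (2 * y + 5) *
     ((y + 1) * W * (y - J) * (y - J - 1) *
      ((y + 2) * (y + 1) * W * (y - J)) +
      (y + 1) * W * (y - J) * ((y + 2) * (y + 1) * W) *
      ((J + 3) * (J + 4))) -
     (y + 1) *
     (W * (y - J) * (y - J - 1) *
      (y - J - 2) *
      ((y + 1) * W * (y - J) * (y - J - 1)) -
      2 *
      (W * (y - J) * (y - J - 1) *
       ((y + 1) * W * (y - J)) *
       ((J + 3) * (J + 4))) +
      W * (y - J) * ((y + 1) * W) *
      ((J + 2) * (J + 3) * (J + 3) *
       (J + 4)))"
  by (simp add: algebra_simps)

lemma cc_rec_big:
  fixes y :: rat
  shows "(y+4) * cc (y+2) (j+3) = (2*y+5) * (cc (y+1) (j+3) + cc (y+1) (j+2))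
     - (y+1) * (cc y (j+3) - 2 * cc y (j+2) + cc y (j+1))"
proof -
  define W where "W = ff y j"
  have s1: "ff (y+1) (Suc k) = (y+1) * ff y k" for k by (rule ff_shift)
  have s2: "ff (y+2) (Suc k) = (y+2) * ff (y+1) k" for k using ff_shift[of "y+1" k] by (simp add: add.assoc)
  have s3: "ff (y+3) (Suc k) = (y+3) * ff (y+2) k" for k using ff_shift[of "y+2" k] by (simp add: add.assoc)
  have a1: "ff y (j+1) = W * (y - of_nat j)" by (simp add: W_def ff_Suc)
  have a2: "ff y (j+2) = W * (y - of_nat j) * (y - of_nat j - 1)" by (simp add: W_def ff_Suc algebra_simps)
  have a3: "ff y (j+3) = W * (y - of_nat j) * (y - of_nat j - 1) * (y - of_nat j - 2)"
    using a2 by (simp add: W_def ff_Suc algebra_simps numeral_3_eq_3 numeral_2_eq_2)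
  have b1: "ff (y+1) (j+1) = (y+1) * W" using s1[of j] by (simp add: W_def)
  have b2: "ff (y+1) (j+2) = (y+1) * W * (y - of_nat j)" using s1[of "j+1"] a1 by simp
  have b3: "ff (y+1) (j+3) = (y+1) * W * (y - of_nat j) * (y - of_nat j - 1)" using s1[of "j+2"] a2 by (simp add: numeral_3_eq_3 numeral_2_eq_2 mult.assoc)
  have c2: "ff (y+2) (j+2) = (y+2) * (y+1) * W" using s2[of "j+1"] b1 by simp
  have c3: "ff (y+2) (j+3) = (y+2) * (y+1) * W * (y - of_nat j)" using s2[of "j+2"] b2 by (simp add: numeral_3_eq_3 numeral_2_eq_2 mult.assoc)
  have d3: "ff (y+3) (j+3) = (y+3) * (y+2) * (y+1) * W" using s3[of "j+2"] c2 by (simp add: numeral_3_eq_3 numeral_2_eq_2 mult.assoc)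
  have e: "y + 1 + 1 = y + 2" "y + 2 + 1 = y + 3" by simp_all
  define J where "J = (of_nat j :: rat)"
  define D1 where "D1 = (fact (j+1) * fact (j+1) * of_nat (j+1+1) :: rat)"
  define D2 where "D2 = (fact (j+2) * fact (j+2) * of_nat (j+2+1) :: rat)"
  define D3 where "D3 = (fact (j+3) * fact (j+3) * of_nat (j+3+1) :: rat)"
  have f3: "(fact (j+3) :: rat) = (J+3) * fact (j+2)"
    by (simp add: J_def numeral_3_eq_3 numeral_2_eq_2 algebra_simps)
  have f2: "(fact (j+2) :: rat) = (J+2) * fact (j+1)"
    by (simp add: J_def numeral_2_eq_2 algebra_simps)
  have dd2: "D3 = D2 * ((J+3)*(J+4))"
    unfolding D2_def D3_def f3 by (simp add: J_def algebra_simps)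
  have dd1: "D3 = D1 * ((J+2)*(J+3)*(J+3)*(J+4))"
    unfolding D1_def D3_def f3 f2 by (simp add: J_def algebra_simps)
  have D3nz: "D3 \<noteq> 0" unfolding D3_def by simp
  have m3: "cc a (j+3) * D3 = ff a (j+3) * ff (a+1) (j+3)" for a unfolding cc_def D3_def by simp
  have m2: "cc a (j+2) * D2 = ff a (j+2) * ff (a+1) (j+2)" for a unfolding cc_def D2_def by simp
  have m1: "cc a (j+1) * D1 = ff a (j+1) * ff (a+1) (j+1)" for a unfolding cc_def D1_def by simp
  have L: "((y+4) * cc (y+2) (j+3)) * D3 = (y+4) * (cc (y+2) (j+3) * D3)" by (simp add: algebra_simps)
  have R: "((2*y+5) * (cc (y+1) (j+3) + cc (y+1) (j+2))
     - (y+1) * (cc y (j+3) - 2 * cc y (j+2) + cc y (j+1))) * D3 =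
     (2*y+5) * (cc (y+1) (j+3) * D3 + (cc (y+1) (j+2) * D2) * ((J+3)*(J+4)))
     - (y+1) * (cc y (j+3) * D3 - 2 * ((cc y (j+2) * D2) * ((J+3)*(J+4)))
        + (cc y (j+1) * D1) * ((J+2)*(J+3)*(J+3)*(J+4)))"
  proof -
    have q2: "cc a (j+2) * D3 = (cc a (j+2) * D2) * ((J+3)*(J+4))" for a
      unfolding dd2 by (simp add: mult.assoc)
    have q1: "cc a (j+1) * D3 = (cc a (j+1) * D1) * ((J+2)*(J+3)*(J+3)*(J+4))" for a
      unfolding dd1 by (simp add: mult.assoc)
    have "((2*y+5) * (cc (y+1) (j+3) + cc (y+1) (j+2))
     - (y+1) * (cc y (j+3) - 2 * cc y (j+2) + cc y (j+1))) * D3 =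
     (2*y+5) * (cc (y+1) (j+3) * D3 + cc (y+1) (j+2) * D3)
     - (y+1) * (cc y (j+3) * D3 - 2 * (cc y (j+2) * D3) + cc y (j+1) * D3)"
      by (simp add: algebra_simps)
    then show ?thesis unfolding q1 q2 .
  qed
  have key: "((y+4) * cc (y+2) (j+3)) * D3 = ((2*y+5) * (cc (y+1) (j+3) + cc (y+1) (j+2))
     - (y+1) * (cc y (j+3) - 2 * cc y (j+2) + cc y (j+1))) * D3"
    unfolding L R m1 m2 m3 e a1 a2 a3 b1 b2 b3 c2 c3 d3 J_def
    by (rule polyidW)
  show ?thesis using key D3nz by simp
qed

lemma cc_rec_small:
  fixes y :: rat
  shows "(y+4) * cc (y+2) 2 = (2*y+5) * (cc (y+1) 2 + cc (y+1) 1)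
     - (y+1) * (cc y 2 - 2 * cc y 1 + cc y 0)"
    "(y+4) * cc (y+2) 1 = (2*y+5) * (cc (y+1) 1 + cc (y+1) 0)
     - (y+1) * (cc y 1 - 2 * cc y 0)"
    "(y+4) * cc (y+2) 0 = (2*y+5) * (cc (y+1) 0) - (y+1) * (cc y 0)"
  by (simp_all add: cc_def ff_def numeral_2_eq_2 field_simps)

lemma cnar: "n \<ge> 1 \<Longrightarrow> coeff (narayana (int n)) k = cc (of_nat n - 1) k"
  by (simp add: coeff_nar cc_def)




lemma cc_rec_big':
  fixes y :: rat
  shows "(y+4) * cc (y+2) (Suc (Suc (Suc j))) = (2*y+5) * (cc (y+1) (Suc (Suc (Suc j))) + cc (y+1) (Suc (Suc j)))
     - (y+1) * (cc y (Suc (Suc (Suc j))) - 2 * cc y (Suc (Suc j)) + cc y (Suc j))"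
  using cc_rec_big[of y j] by (simp add: numeral_3_eq_3 numeral_2_eq_2)

lemma cc_rec_small':
  fixes y :: rat
  shows "(y+4) * cc (y+2) (Suc (Suc 0)) = (2*y+5) * (cc (y+1) (Suc (Suc 0)) + cc (y+1) (Suc 0))
     - (y+1) * (cc y (Suc (Suc 0)) - 2 * cc y (Suc 0) + cc y 0)"
    "(y+4) * cc (y+2) (Suc 0) = (2*y+5) * (cc (y+1) (Suc 0) + cc (y+1) 0)
     - (y+1) * (cc y (Suc 0) - 2 * cc y 0)"
    "(y+4) * cc (y+2) 0 = (2*y+5) * (cc (y+1) 0) - (y+1) * (cc y 0)"
  using cc_rec_small[of y] by (simp_all add: numeral_2_eq_2)

lemma coeff_t1:
  "coeff ([:1,1:] * p) 0 = coeff (p::rat poly) 0"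
  "coeff ([:1,1:] * p) (Suc k) = coeff p (Suc k) + coeff p k"
  by simp_all

lemma coeff_t2:
  "coeff ([:1,-2,1:] * p) 0 = coeff (p::rat poly) 0"
  "coeff ([:1,-2,1:] * p) (Suc 0) = coeff p (Suc 0) - 2 * coeff p 0"
  "coeff ([:1,-2,1:] * p) (Suc (Suc k)) = coeff p (Suc (Suc k)) - 2 * coeff p (Suc k) + coeff p k"
  by (simp_all add: algebra_simps)

lemma nar_rec:
  assumes "m \<ge> 1"
  shows "smult (of_nat (m+3)) (narayana (int (m+2))) = smult (of_nat (2*m+3)) ([:1,1:] * narayana (int (m+1)))
     - smult (of_nat m) ([:1,-2,1:] * narayana (int m))"
proof (rule poly_eqI)
  fix k
  define y :: rat where "y = of_nat m - 1"
  have h0: "coeff (narayana (int m)) i = cc y i" for i using assms by (simp add: cnar y_def)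
  have h1: "coeff (narayana (int (m+1))) i = cc (y+1) i" for i
  proof -
    have "coeff (narayana (int (m+1))) i = cc (of_nat (m+1) - 1) i" by (rule cnar) simp
    then show ?thesis by (simp add: y_def)
  qed
  have h2: "coeff (narayana (int (m+2))) i = cc (y+2) i" for i
  proof -
    have "coeff (narayana (int (m+2))) i = cc (of_nat (m+2) - 1) i" by (rule cnar) simp
    then show ?thesis by (simp add: y_def)
  qed
  have e1: "(of_nat (m+3) :: rat) = y + 4" "(of_nat (2*m+3) :: rat) = 2*y+5" "(of_nat m :: rat) = y + 1"
    by (simp_all add: y_def)
  show "coeff (smult (of_nat (m+3)) (narayana (int (m+2)))) k = coeff (smult (of_nat (2*m+3)) ([:1,1:] * narayana (int (m+1)))
     - smult (of_nat m) ([:1,-2,1:] * narayana (int m))) k"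
    unfolding coeff_smult coeff_diff e1
  proof (cases k)
    case 0
    show "(y + 4) * coeff (narayana (int (m + 2))) k =
    (2 * y + 5) * coeff ([:1, 1:] * narayana (int (m + 1))) k -
    (y + 1) * coeff ([:1, - 2, 1:] * narayana (int m)) k"
      unfolding 0 coeff_t1 coeff_t2 h0 h1 h2 by (rule cc_rec_small'(3))
  next
    case (Suc k1)
    show "(y + 4) * coeff (narayana (int (m + 2))) k =
    (2 * y + 5) * coeff ([:1, 1:] * narayana (int (m + 1))) k -
    (y + 1) * coeff ([:1, - 2, 1:] * narayana (int m)) k"
    proof (cases k1)
      case 0
      show ?thesis unfolding \<open>k = Suc k1\<close> 0 coeff_t1 coeff_t2 h0 h1 h2 by (rule cc_rec_small'(2))
    next
      case (Suc k2)
      show ?thesis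
      proof (cases k2)
        case 0
        show ?thesis unfolding \<open>k = Suc k1\<close> \<open>k1 = Suc k2\<close> 0 coeff_t1 coeff_t2 h0 h1 h2
          by (rule cc_rec_small'(1))
      next
        case (Suc j)
        show ?thesis unfolding \<open>k = Suc k1\<close> \<open>k1 = Suc k2\<close> \<open>k2 = Suc j\<close> coeff_t1 coeff_t2 h0 h1 h2
          by (rule cc_rec_big')
      qed
    qed
  qed
qed



no_notation vec_index (infixl \<open>$\<close> 100)
notation fps_nth (infixl \<open>$\<close> 75)

definition AA :: "rat poly fps" where "AA = Abs_fps (\<lambda>n. narayana (int n))"

lemma nar0: "narayana 0 = 1" by (simp add: narayana_def)
lemma nar1: "narayana 1 = 1" by (simp add: narayana_def)
lemma nar2: "narayana 2 = [:1,1:]"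
proof -
  have "(1::rat poly) + pCons 0 1 = [:1,1:]"
    by (auto simp: poly_eq_iff coeff_pCons split: nat.split)
  then show ?thesis by (simp add: narayana_def numeral_2_eq_2 monom_Suc)
qed

lemma AA_nth: "AA $ n = narayana (int n)" by (simp add: AA_def)

definition P1 :: "rat poly" where "P1 = [:1,1:]"
definition P2 :: "rat poly" where "P2 = [:1,-2,1:]"
definition Qm :: "rat poly" where "Qm = [:-1,1:]"
definition tt :: "rat poly" where "tt = [:0,1:]"

lemma P1_tt: "P1 = tt + 1"
  by (auto simp: poly_eq_iff P1_def tt_def coeff_pCons split: nat.split)
lemma Qm_tt: "Qm = tt - 1"
  by (auto simp: poly_eq_iff Qm_def tt_def coeff_pCons split: nat.split)
lemma P2_tt: "P2 = (tt - 1) * (tt - 1)"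
proof -
  have "tt - 1 = [:-1,1:]" by (auto simp: poly_eq_iff tt_def coeff_pCons split: nat.split)
  then show ?thesis by (simp add: P2_def)
qed

lemma rec_abs:
  fixes a0 a1 a2 p1 p2 :: "'a::comm_ring_1"
  assumes "of_nat (m+3) * a2 = of_nat (2*m+3) * (p1*a1) - of_nat m * (p2*a0)"
  shows "of_nat (m+2) * a2 - 2*p1*(of_nat (m+1)*a1) + p2*(of_nat m * a0) = -a2 + p1*a1"
proof -
  have "of_nat (m+2) * a2 - 2*p1*(of_nat (m+1)*a1) + p2*(of_nat m * a0) - (-a2 + p1*a1)
     = of_nat (m+3) * a2 - (of_nat (2*m+3) * (p1*a1) - of_nat m * (p2*a0))"
    by (simp add: algebra_simps)
  also have "\<dots> = 0" using assms by simp
  finally show ?thesis by simp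
qed

lemma rec_step:
  fixes m :: nat
  shows "of_nat (m+2) * narayana (int (m+2)) - 2 * P1 * (of_nat (m+1) * narayana (int (m+1)))
     + (if m = 0 then 0 else P2 * (of_nat m * narayana (int m)))
     = - narayana (int (m+2)) + P1 * narayana (int (m+1))"
proof (cases "m = 0")
  case True
  have "narayana (int (0+2)) = P1" using nar2 by (simp add: P1_def)
  moreover have "narayana (int (0+1)) = 1" using nar1 by simp
  ultimately show ?thesis using True by (simp add: algebra_simps)
next
  case False
  then have H: "smult (of_nat (m+3)) (narayana (int (m+2))) = smult (of_nat (2*m+3)) ([:1,1:] * narayana (int (m+1)))
     - smult (of_nat m) ([:1,-2,1:] * narayana (int m))" by (intro nar_rec) simp
  have H': "of_nat (m+3) * narayana (int (m+2)) = of_nat (2*m+3) * (P1 * narayana (int (m+1)))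
     - of_nat m * (P2 * narayana (int m))"
    using H unfolding of_nat_mult_conv_smult[symmetric] P1_def[symmetric] P2_def[symmetric] .
  show ?thesis using rec_abs[OF H'] False by simp
qed

lemma ode:
  "fps_X * fps_deriv AA - fps_const (2*P1) * (fps_X^2 * fps_deriv AA)
    + fps_const P2 * (fps_X^3 * fps_deriv AA)
   = - AA + fps_const P1 * (fps_X * AA) + 1 - fps_const Qm * fps_X"
proof (rule fps_ext)
  fix n :: nat
  have "n = 0 \<or> n = 1 \<or> (\<exists>m. n = m + 2)" by presburger
  then consider "n = 0" | "n = 1" | m where "n = m + 2" by blast
  then show "(fps_X * fps_deriv AA - fps_const (2*P1) * (fps_X^2 * fps_deriv AA)
    + fps_const P2 * (fps_X^3 * fps_deriv AA)) $ n
   = (- AA + fps_const P1 * (fps_X * AA) + 1 - fps_const Qm * fps_X) $ n"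
  proof cases
    case 1
    then show ?thesis by (simp add: AA_nth fps_X_power_mult_nth nar0)
  next
    case 2
    have "P1 - Qm = 2" by (simp add: P1_tt Qm_tt)
    then show ?thesis using 2 by (simp add: AA_nth fps_X_power_mult_nth nar0 nar1 algebra_simps)
  next
    case 3
    have e3: "(if m + 2 < 3 then 0 else of_nat (m + 2 - 3 + 1) * narayana (int (m + 2 - 3 + 1)))
       = (if m = 0 then 0 else of_nat m * narayana (int m))" by auto
    have "(fps_X * fps_deriv AA - fps_const (2*P1) * (fps_X^2 * fps_deriv AA)
    + fps_const P2 * (fps_X^3 * fps_deriv AA)) $ (m+2) =
      of_nat (m+2) * narayana (int (m+2)) - 2 * P1 * (of_nat (m+1) * narayana (int (m+1)))
     + P2 * (if m = 0 then 0 else of_nat m * narayana (int m))"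
      apply (simp only: fps_sub_nth fps_add_nth fps_mult_left_const_nth fps_X_power_mult_nth fps_X_mult_nth
          fps_deriv_nth AA_nth e3)
      apply (simp add: mult.assoc)
      done
    also have "\<dots> = - narayana (int (m+2)) + P1 * narayana (int (m+1))"
      using rec_step[of m] by (cases "m = 0") simp_all
    also have "\<dots> = (- AA + fps_const P1 * (fps_X * AA) + 1 - fps_const Qm * fps_X) $ (m+2)"
      by (simp add: AA_nth)
    finally show ?thesis using 3 by simp
  qed
qed



no_notation vec_index (infixl \<open>$\<close> 100)
notation fps_nth (infixl \<open>$\<close> 75)

lemma uniq:
  fixes F Pp Lam :: "rat poly fps"
  assumes F0: "F $ 0 = 0" and E: "(fps_X * Pp) * fps_deriv F = Lam * F"
    and P0: "Pp $ 0 = 1" and L0: "Lam $ 0 = -1"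
  shows "F = 0"
proof -
  have "\<forall>j<n. F $ j = 0" for n
  proof (induction n)
    case 0 then show ?case by simp
  next
    case (Suc n)
    show ?case
    proof (cases n)
      case 0 then show ?thesis using F0 by simp
    next
      case (Suc k)
      have IH: "F $ j = 0" if "j \<le> k" for j using Suc.IH that \<open>n = Suc k\<close> by simp
      have l: "((fps_X * Pp) * fps_deriv F) $ n = of_nat n * F $ n"
      proof -
        have "((fps_X * Pp) * fps_deriv F) $ n = (Pp * fps_deriv F) $ k"
          using \<open>n = Suc k\<close> by (simp add: mult.assoc)
        also have "\<dots> = (\<Sum>i=0..k. Pp$i * (fps_deriv F)$(k - i))" by (rule fps_mult_nth)
        also have "\<dots> = Pp$0 * (fps_deriv F)$(k - 0) + (\<Sum>i=Suc 0..k. Pp$i * (fps_deriv F)$(k - i))"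
          by (rule sum.atLeast_Suc_atMost) simp
        also have "(\<Sum>i=Suc 0..k. Pp$i * (fps_deriv F)$(k - i)) = 0"
          by (rule sum.neutral) (auto simp: IH)
        finally show ?thesis using P0 \<open>n = Suc k\<close> by simp
      qed
      have r: "(Lam * F) $ n = - F $ n"
      proof -
        have "(Lam * F) $ n = (\<Sum>i=0..n. Lam$i * F$(n - i))" by (rule fps_mult_nth)
        also have "\<dots> = Lam$0 * F$(n - 0) + (\<Sum>i=Suc 0..n. Lam$i * F$(n - i))"
          by (rule sum.atLeast_Suc_atMost) simp
        also have "(\<Sum>i=Suc 0..n. Lam$i * F$(n - i)) = 0"
          by (rule sum.neutral) (auto simp: IH \<open>n = Suc k\<close>)
        finally show ?thesis using L0 by simp
      qed
      have "of_nat n * F $ n = - F $ n" using l r E by simp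
      then have "(of_nat n + 1) * F $ n = 0" by (simp add: algebra_simps)
      moreover have "(of_nat n + 1 :: rat poly) \<noteq> 0"
        by (metis of_nat_Suc of_nat_neq_0 add.commute)
      ultimately have "F $ n = 0" by simp
      then show ?thesis using Suc.IH less_Suc_eq by auto
    qed
  qed
  then show ?thesis by (intro fps_ext) auto
qed

definition TT :: "rat poly fps" where "TT = fps_const tt"
definition QQ :: "rat poly fps" where
  "QQ = TT * fps_X * AA * AA - (1 + fps_const Qm * fps_X) * AA + 1"

lemma QQ_zero: "QQ = 0"
proof -
  define D where "D = fps_deriv AA"
  define X :: "rat poly fps" where "X = fps_X"
  define Pp where "Pp = 1 - fps_const (2*P1) * X + fps_const P2 * X^2"
  define Lam where "Lam = fps_const P2 * X^2 - 1"
  have c1: "fps_const P1 = TT + 1" unfolding TT_def P1_tt by (metis fps_const_add fps_const_1_eq_1)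
  have c2: "fps_const Qm = TT - 1" unfolding TT_def Qm_tt by (metis fps_const_sub fps_const_1_eq_1)
  have c3: "fps_const P2 = (TT - 1) * (TT - 1)" unfolding TT_def P2_tt by (metis fps_const_sub fps_const_1_eq_1 fps_const_mult)
  have c4: "fps_const (2*P1) = 2 * (TT + 1)" unfolding c1[symmetric] by (simp add: fps_numeral_fps_const)
  have MD: "X * Pp * D = - AA + fps_const P1 * (X * AA) + 1 - fps_const Qm * X"
  proof -
    have "X * Pp * D = X * D - fps_const (2*P1) * (X^2 * D) + fps_const P2 * (X^3 * D)"
      by (simp add: Pp_def algebra_simps power2_eq_square power3_eq_cube)
    then show ?thesis using ode unfolding D_def X_def by simp
  qed
  have dQ: "fps_deriv QQ = TT * AA * AA + 2 * TT * X * AA * D - fps_const Qm * AA - (1 + fps_const Qm * X) * D"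
    unfolding QQ_def D_def X_def TT_def by (simp add: algebra_simps)
  have "(X * Pp) * fps_deriv QQ = TT * X * Pp * AA * AA + (2 * TT * X * AA - (1 + fps_const Qm * X)) * (X * Pp * D)
      - fps_const Qm * X * Pp * AA"
    unfolding dQ by (simp add: algebra_simps)
  also have "\<dots> = TT * X * Pp * AA * AA + (2 * TT * X * AA - (1 + fps_const Qm * X)) *
       (- AA + fps_const P1 * (X * AA) + 1 - fps_const Qm * X) - fps_const Qm * X * Pp * AA"
    unfolding MD ..
  also have "\<dots> = Lam * QQ"
    unfolding Lam_def QQ_def Pp_def c1 c2 c3 c4 X_def
    by (simp add: algebra_simps power2_eq_square)
  finally have E: "(fps_X * Pp) * fps_deriv QQ = Lam * QQ" unfolding X_def .
  show ?thesis
  proof (rule uniq[OF _ E])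
    show "QQ $ 0 = 0" by (simp add: QQ_def AA_nth nar0)
    show "Pp $ 0 = 1" by (simp add: Pp_def X_def)
    show "Lam $ 0 = -1" by (simp add: Lam_def X_def)
  qed
qed

fun gg :: "nat \<Rightarrow> rat poly" where
  "gg 0 = 1"
| "gg (Suc 0) = -1"
| "gg (Suc (Suc k)) = - tt * narayana (int (Suc k))"

lemma GG: "Abs_fps gg = 1 + fps_const Qm * fps_X - TT * fps_X * AA"
proof (rule fps_ext)
  fix n :: nat
  show "Abs_fps gg $ n = (1 + fps_const Qm * fps_X - TT * fps_X * AA) $ n"
  proof (cases n)
    case 0 then show ?thesis by (simp add: AA_nth)
  next
    case (Suc k)
    show ?thesis
    proof (cases k)
      case 0 then show ?thesis using \<open>n = Suc k\<close> by (simp add: AA_nth TT_def Qm_tt nar0 mult.assoc)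
    next
      case (Suc k')
      then show ?thesis using \<open>n = Suc k\<close> by (simp add: AA_nth TT_def mult.assoc)
    qed
  qed
qed

lemma conv: "(\<Sum>i=0..N. gg i * narayana (int (N - i))) = (if N = 0 then 1 else 0)"
proof -
  have "Abs_fps gg * AA = 1 - QQ"
    unfolding GG QQ_def by (simp add: algebra_simps)
  then have "Abs_fps gg * AA = 1" using QQ_zero by simp
  then have "(Abs_fps gg * AA) $ N = (1 :: rat poly fps) $ N" by simp
  then show ?thesis unfolding fps_mult_nth by (simp add: AA_nth)
qed




lemma nar_neg: "z < 0 \<Longrightarrow> narayana z = 0" by (simp add: narayana_def)

definition gz :: "int \<Rightarrow> rat poly" where "gz z = (if z < 0 then 0 else gg (nat z))"

lemma L1:
  assumes "k < n"
  shows "(\<Sum>l\<in>{0..<n}. gz (int k - int l) * h l) = (\<Sum>l=0..k. gg (k - l) * h l)"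
proof (rule sum.mono_neutral_cong_right)
  show "finite {0..<n}" by simp
  show "{0..k} \<subseteq> {0..<n}" using assms by auto
  show "\<forall>i\<in>{0..<n} - {0..k}. gz (int k - int i) * h i = 0" by (auto simp: gz_def)
  show "\<And>x. x \<in> {0..k} \<Longrightarrow> gz (int k - int x) * h x = gg (k - x) * h x"
    by (auto simp: gz_def nat_diff_distrib)
qed

lemma conv_rev: "(\<Sum>i=0..N. gg (N - i) * narayana (int i)) = (if N = 0 then 1 else 0)"
proof -
  have "(\<Sum>i=0..N. gg i * narayana (int (N - i))) = (\<Sum>i=0..N. gg (N + 0 - i) * narayana (int (N - (N + 0 - i))))"
    by (rule sum.atLeastAtMost_rev)
  also have "\<dots> = (\<Sum>i=0..N. gg (N - i) * narayana (int i))"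
    by (rule sum.cong) auto
  finally show ?thesis using conv[of N] by simp
qed

lemma Bcol_low:
  assumes "k < n" "j \<le> m"
  shows "(\<Sum>l\<in>{0..<n}. gz (int k - int l) * narayana (int l + int j + - int m)) = (if k = m - j then 1 else 0)"
proof -
  define d where "d = m - j"
  have e: "int l + int j + - int m = int l - int d" for l using assms(2) by (simp add: d_def)
  have "(\<Sum>l\<in>{0..<n}. gz (int k - int l) * narayana (int l + int j + - int m)) =
        (\<Sum>l=0..k. gg (k - l) * narayana (int l - int d))"
    unfolding e by (rule L1[OF assms(1)])
  also have "\<dots> = (if k = d then 1 else 0)"
  proof (cases "k < d")
    case True
    then show ?thesis by (auto intro!: sum.neutral simp: nar_neg)
  next
    case False
    then have kd: "d \<le> k" by simp
    have "(\<Sum>l=0..k. gg (k - l) * narayana (int l - int d)) = (\<Sum>l=d..k. gg (k - l) * narayana (int l - int d))"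
      by (rule sum.mono_neutral_right) (auto simp: nar_neg)
    also have "\<dots> = (\<Sum>l=0+d..(k-d)+d. gg (k - l) * narayana (int l - int d))" using kd by simp
    also have "\<dots> = (\<Sum>i=0..k-d. gg (k - (i + d)) * narayana (int (i + d) - int d))"
      by (rule sum.shift_bounds_cl_nat_ivl)
    also have "\<dots> = (\<Sum>i=0..k-d. gg ((k - d) - i) * narayana (int i))"
      by (rule sum.cong) (auto simp: ac_simps)
    also have "\<dots> = (if k - d = 0 then 1 else 0)" by (rule conv_rev)
    finally show ?thesis using kd by auto
  qed
  finally show ?thesis by (simp add: d_def)
qed

lemma Bcol_high:
  assumes "k < n" "1 \<le> k"
  shows "(\<Sum>l\<in>{0..<n}. gz (int k - int l) * narayana (int l + int (m + 1 + b) + - int m))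
     = tt * (\<Sum>r=0..b. narayana (int (k + r)) * narayana (int (b - r)))"
proof -
  define N where "N = k + (b + 1)"
  define f where "f i = gg i * narayana (int (N - i))" for i
  have e: "int l + int (m + 1 + b) + - int m = int (l + b + 1)" for l by simp
  have S: "(\<Sum>l\<in>{0..<n}. gz (int k - int l) * narayana (int l + int (m + 1 + b) + - int m)) =
        (\<Sum>l=0..k. gg (k - l) * narayana (int (l + b + 1)))"
    unfolding e by (rule L1[OF assms(1)])
  have "sum f {0..N} = 0" unfolding f_def N_def using conv[of "k + (b+1)"] by simp
  moreover have "sum f {0..N} = sum f {0..k} + sum f {k+1..k+(b+1)}"
    unfolding N_def by (rule sum.ub_add_nat) simp
  moreover have "sum f {0..k} = (\<Sum>l=0..k. gg (k - l) * narayana (int (l + b + 1)))"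
  proof -
    have "sum f {0..k} = (\<Sum>l=0..k. f (k + 0 - l))" by (rule sum.atLeastAtMost_rev)
    also have "\<dots> = (\<Sum>l=0..k. gg (k - l) * narayana (int (l + b + 1)))"
      by (rule sum.cong) (auto simp: f_def N_def ac_simps)
    finally show ?thesis .
  qed
  moreover have "sum f {k+1..k+(b+1)} = - tt * (\<Sum>r=0..b. narayana (int (k + r)) * narayana (int (b - r)))"
  proof -
    have "sum f {k+1..k+(b+1)} = sum f {0 + (k+1)..b + (k+1)}" by (simp add: add.commute)
    also have "\<dots> = (\<Sum>r=0..b. f (r + (k+1)))" by (rule sum.shift_bounds_cl_nat_ivl)
    also have "\<dots> = (\<Sum>r=0..b. - tt * (narayana (int (k + r)) * narayana (int (b - r))))"
    proof (rule sum.cong)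
      fix r assume r: "r \<in> {0..b}"
      obtain k' where k': "k = Suc k'" using assms(2) by (cases k) auto
      have "r + (k + 1) = Suc (Suc (r + k'))" using k' by simp
      then have "gg (r + (k+1)) = - tt * narayana (int (k + r))" using k' by (simp add: add.commute)
      moreover have "N - (r + (k+1)) = b - r" using r by (simp add: N_def)
      ultimately show "f (r + (k+1)) = - tt * (narayana (int (k + r)) * narayana (int (b - r)))"
        by (simp add: f_def)
    qed simp
    also have "\<dots> = - tt * (\<Sum>r=0..b. narayana (int (k + r)) * narayana (int (b - r)))"
      by (simp add: sum_distrib_left)
    finally show ?thesis .
  qed
  ultimately show ?thesis using S by (simp add: algebra_simps add_eq_0_iff)
qed




lemma mult_entry:
  assumes "k < n" "j < n"
  shows "(mat n n f * mat n n h) $$ (k,j) = (\<Sum>l\<in>{0..<n}. f (k,l) * h (l,j))"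
  using assms by (simp add: scalar_prod_def)

lemma mult_entry2:
  assumes "k < n" "j < n"
  shows "(mat n n f * mat n n h) $$ (k,j) = (\<Sum>l<n. f (k,l) * h (l,j))"
  using mult_entry[OF assms] by (simp add: atLeast0LessThan)

lemma det_anti:
  fixes M :: "rat poly mat"
  assumes "M \<in> carrier_mat N N" "p \<le> N"
    "\<And>k j. k < N \<Longrightarrow> j < p \<Longrightarrow> M $$ (k,j) = (if k + j + 1 = p then 1 else 0)"
  shows "det M = (-1)^(p choose 2) * det (mat (N-p) (N-p) (\<lambda>(a,b). M $$ (p+a, p+b)))"
  using assms
proof (induction p arbitrary: N M)
  case 0
  have "mat (N-0) (N-0) (\<lambda>(a,b). M $$ (0+a, 0+b)) = M"
    using 0 by (intro eq_matI) auto
  then show ?case by (simp add: binomial_eq_0)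
next
  case (Suc p)
  obtain N' where N': "N = Suc N'" using Suc.prems(2) by (cases N) auto
  have "det M = (\<Sum>i<N. M $$ (i,0) * cofactor M i 0)"
    by (rule laplace_expansion_column[OF Suc.prems(1)]) (simp add: N')
  also have "\<dots> = (\<Sum>i<N. if i = p then cofactor M i 0 else 0)"
    by (rule sum.cong) (auto simp: Suc.prems(3) N')
  also have "\<dots> = cofactor M p 0" using Suc.prems(2) by simp
  also have "\<dots> = (-1)^p * det (mat_delete M p 0)" by (simp add: cofactor_def)
  finally have d1: "det M = (-1)^p * det (mat_delete M p 0)" .
  define M' where "M' = mat_delete M p 0"
  have M'c: "M' \<in> carrier_mat N' N'" unfolding M'_def using mat_delete_carrier[OF Suc.prems(1)] N' by simp
  have M'e: "M' $$ (k, j) = M $$ (if k < p then k else Suc k, Suc j)" if "k < N'" "j < N'" for k j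
    using that Suc.prems(1) N' by (simp add: M'_def mat_delete_def)
  have hyp: "M' $$ (k,j) = (if k + j + 1 = p then 1 else 0)" if "k < N'" "j < p" for k j
  proof -
    have jN: "j < N'" using that Suc.prems(2) N' by simp
    show ?thesis
    proof (cases "k < p")
      case True
      then show ?thesis using M'e[OF that(1) jN] Suc.prems(3)[of k "Suc j"] that N' by auto
    next
      case False
      then show ?thesis using M'e[OF that(1) jN] Suc.prems(3)[of "Suc k" "Suc j"] that N' by auto
    qed
  qed
  have IH: "det M' = (-1)^(p choose 2) * det (mat (N'-p) (N'-p) (\<lambda>(a,b). M' $$ (p+a, p+b)))"
    by (rule Suc.IH[OF M'c]) (use Suc.prems(2) N' hyp in auto)
  have "mat (N'-p) (N'-p) (\<lambda>(a,b). M' $$ (p+a, p+b)) = mat (N - Suc p) (N - Suc p) (\<lambda>(a,b). M $$ (Suc p+a, Suc p+b))"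
    by (intro eq_matI) (auto simp: M'e N')
  moreover have "(-1::rat poly)^p * (-1)^(p choose 2) = (-1)^(Suc p choose 2)"
    by (simp add: numeral_2_eq_2 power_add[symmetric] add.commute)
  ultimately show ?case using d1 IH unfolding M'_def by (simp add: mult.assoc[symmetric])
qed




lemma part_zero:
  assumes "1 \<le> n" "n \<le> m"
  shows "hankel_det (- int m) n = 0"
proof -
  define HA where "HA = mat n n (\<lambda>(i, j). narayana (int i + int j + - int m))"
  have "det HA = (\<Sum>j<n. HA $$ (0,j) * cofactor HA 0 j)"
    by (rule laplace_expansion_row) (use assms in \<open>auto simp: HA_def\<close>)
  also have "\<dots> = 0"
    by (rule sum.neutral) (use assms in \<open>auto simp: HA_def nar_neg\<close>)
  finally show ?thesis by (simp add: hankel_det_def HA_def)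
qed

lemma part_main:
  assumes "n \<ge> m + 1"
  shows "hankel_det (- int m) n =
     (-1) ^ ((m + 1) choose 2) * [:0, 1:] ^ (n - m - 1) * hankel_det (int m + 1) (n - m - 1)"
proof -
  define s where "s = n - (m + 1)"
  define HA where "HA = mat n n (\<lambda>(i, j). narayana (int i + int j + - int m))"
  define GM where "GM = mat n n (\<lambda>(i, k). gz (int i - int k))"
  define BM where "BM = GM * HA"
  define H' where "H' = mat s s (\<lambda>(i, j). narayana (int i + int j + (int m + 1)))"
  define U where "U = mat s s (\<lambda>(i, j). narayana (int j - int i))"
  have HAc: "HA \<in> carrier_mat n n" and GMc: "GM \<in> carrier_mat n n" by (simp_all add: HA_def GM_def)
  have BMc: "BM \<in> carrier_mat n n" using HAc GMc by (simp add: BM_def)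
  have detG: "det GM = 1"
  proof -
    have "det GM = prod_list (diag_mat GM)"
      by (rule det_lower_triangular[OF _ GMc]) (auto simp: GM_def gz_def)
    also have "\<dots> = (\<Prod>i = 0..<n. GM $$ (i,i))" by (simp add: prod_list_diag_prod GM_def)
    also have "\<dots> = 1" by (rule prod.neutral) (auto simp: GM_def gz_def)
    finally show ?thesis .
  qed
  have dB: "det BM = det HA" unfolding BM_def using det_mult[OF GMc HAc] detG by simp
  have BMe: "BM $$ (k,j) = (\<Sum>l\<in>{0..<n}. gz (int k - int l) * narayana (int l + int j + - int m))"
    if "k < n" "j < n" for k j
    unfolding BM_def GM_def HA_def
    using mult_entry[OF that, where f="\<lambda>(i, k). gz (int i - int k)" and h="\<lambda>(i, j). narayana (int i + int j + - int m)"]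
    by simp
  define QM where "QM = mat (n - (m+1)) (n - (m+1)) (\<lambda>(a,b). BM $$ (m + 1 + a, m + 1 + b))"
  have dB2: "det BM = (-1)^((m+1) choose 2) * det QM"
    unfolding QM_def
  proof (rule det_anti[OF BMc assms])
    fix k j assume kj: "k < n" "j < m + 1"
    then show "BM $$ (k, j) = (if k + j + 1 = m + 1 then 1 else 0)"
      using BMe[of k j] Bcol_low[of k n j m] assms by auto
  qed
  have HUc: "H' * U \<in> carrier_mat s s" unfolding H'_def U_def by (intro mult_carrier_mat) auto
  have QMeq: "QM = tt \<cdot>\<^sub>m (H' * U)"
  proof (rule eq_matI)
    fix a b assume ab: "a < dim_row (tt \<cdot>\<^sub>m (H' * U))" "b < dim_col (tt \<cdot>\<^sub>m (H' * U))"
    then have a: "a < s" and b: "b < s" by (simp_all add: H'_def U_def)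
    have "QM $$ (a,b) = BM $$ (m + 1 + a, m + 1 + b)" using a b by (simp add: QM_def s_def)
    also have "\<dots> = (\<Sum>l\<in>{0..<n}. gz (int (m+1+a) - int l) * narayana (int l + int (m+1+b) + - int m))"
      using a b by (intro BMe) (simp_all add: s_def)
    also have "\<dots> = tt * (\<Sum>r=0..b. narayana (int (m+1+a + r)) * narayana (int (b - r)))"
      by (rule Bcol_high) (use a s_def in auto)
    also have "(\<Sum>r=0..b. narayana (int (m+1+a + r)) * narayana (int (b - r))) = (H' * U) $$ (a,b)"
    proof -
      have "(H' * U) $$ (a,b) = (\<Sum>c\<in>{0..<s}. narayana (int a + int c + (int m + 1)) * narayana (int b - int c))"
        unfolding H'_def U_def
        using mult_entry[OF a b, where f="\<lambda>(i, j). narayana (int i + int j + (int m + 1))" and h="\<lambda>(i, j). narayana (int j - int i)"]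
        by simp
      also have "\<dots> = (\<Sum>r=0..b. narayana (int (m+1+a + r)) * narayana (int (b - r)))"
      proof (rule sum.mono_neutral_cong_right)
        show "finite {0..<s}" by simp
        show "{0..b} \<subseteq> {0..<s}" using b by auto
        show "\<forall>i\<in>{0..<s} - {0..b}. narayana (int a + int i + (int m + 1)) * narayana (int b - int i) = 0"
          by (auto simp: nar_neg)
        show "\<And>x. x \<in> {0..b} \<Longrightarrow> narayana (int a + int x + (int m + 1)) * narayana (int b - int x) =
              narayana (int (m+1+a + x)) * narayana (int (b - x))"
          by (auto simp: of_nat_diff ac_simps)
      qed
      finally show ?thesis by simp
    qed
    also have "tt * (H' * U) $$ (a,b) = (tt \<cdot>\<^sub>m (H' * U)) $$ (a,b)"
      using a b by (simp add: H'_def U_def)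
    finally show "QM $$ (a,b) = (tt \<cdot>\<^sub>m (H' * U)) $$ (a,b)" .
  qed (simp_all add: QM_def H'_def U_def s_def)
  have detU: "det U = 1"
  proof -
    have "det U = prod_list (diag_mat U)"
      by (rule det_upper_triangular[of _ s]) (auto simp: U_def upper_triangular_def nar_neg)
    also have "\<dots> = (\<Prod>i = 0..<s. U $$ (i,i))" by (simp add: prod_list_diag_prod U_def)
    also have "\<dots> = 1" by (rule prod.neutral) (auto simp: U_def nar0)
    finally show ?thesis .
  qed
  have dQ: "det QM = tt ^ s * det H'"
    unfolding QMeq det_smult
    using det_mult[of H' s U] detU by (simp add: H'_def U_def)
  have "hankel_det (- int m) n = det HA" by (simp add: hankel_det_def HA_def)
  also have "\<dots> = (-1)^((m+1) choose 2) * (tt ^ s * det H')" using dB dB2 dQ by simp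
  also have "det H' = hankel_det (int m + 1) (n - m - 1)" by (simp add: hankel_det_def H'_def s_def)
  finally show ?thesis by (simp add: tt_def s_def mult.assoc)
qed

theorem theorem8:
  fixes m :: nat
  assumes "m \<ge> 1"
  shows "(\<forall>n. 1 \<le> n \<and> n \<le> m \<longrightarrow> hankel_det (- int m) n = 0) \<and>
         (\<forall>n. n \<ge> m + 1 \<longrightarrow>
            hankel_det (- int m) n =
              (-1) ^ ((m + 1) choose 2) * [:0, 1:] ^ (n - m - 1) * hankel_det (int m + 1) (n - m - 1))"
  using part_zero part_main by blast


end
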